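(* Let $\delta\in(0,1)$. Then $$\mathbb P\Big(\sum_{j=\lceil(1-\delta^2)m\rceil}^{m-1}\psi_{j,z}\le \tfrac52\delta\log N\ \text{ for all } z\in V_N\Big)\ge 1-2e^{-n/10}.$$ Moreover, $$\mathbb P\Big(|\varphi_{N,u}-\varphi_{N,v}|\le 100\sqrt{K\log N}\ \text{ for all nearest-neighbour pairs } u,v\in V_N\Big)\ge 1-e^{-n/10}.$$
   Context: Let $k\ge1$ be an integer, $K=2^k$, $n\ge1$, $N=2^n$, $m=\lfloor n/k\rfloor$, and $V_N=\{0,1,\dots,N-1\}^2$; $\log$ is the natural logarithm. For $j\ge0$ let $\mathcal B_j$ be the set of boxes $x+\{0,\dots,2^j-1\}^2$ with $x\in\mathbb Z^2$, and $\mathcal B_j(z)$ those containing $z$. Let $\{b_{j,B}\}$ be independent centered Gaussians with $\mathrm{Var}(b_{j,B})=2^{-2j}$. Set $\psi_{j,z}=\sum_{B\in\mathcal B_{jk}(z)}\sqrt k\,b_{jk,B}$ and $\varphi_{N,z}=\sum_{j=0}^{m-1}\psi_{j,z}$. *)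

theory Defs
  imports "HOL-Probability.Probability"
begin

text \<open>A box x + {0..2^j-1}^2 is identified with its corner x. The boxes of side 2^j
  containing z are exactly those with corner in z - {0..2^j-1}^2.\<close>
definition boxes_containing :: "nat \<Rightarrow> int \<times> int \<Rightarrow> (int \<times> int) set" where
  "boxes_containing j z =
     {fst z - 2^j + 1 .. fst z} \<times> {snd z - 2^j + 1 .. snd z}"

definition psi :: "nat \<Rightarrow> (nat \<Rightarrow> int \<times> int \<Rightarrow> 'a \<Rightarrow> real) \<Rightarrow> nat \<Rightarrow> int \<times> int \<Rightarrow> 'a \<Rightarrow> real" where
  "psi k b j z \<omega> = (\<Sum>x\<in>boxes_containing (j * k) z. sqrt (real k) * b (j * k) x \<omega>)"

definition phi :: "nat \<Rightarrow> nat \<Rightarrow> (nat \<Rightarrow> int \<times> int \<Rightarrow> 'a \<Rightarrow> real) \<Rightarrow> int \<times> int \<Rightarrow> 'a \<Rightarrow> real" where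
  "phi k n b z \<omega> = (\<Sum>j<n div k. psi k b j z \<omega>)"

definition VN :: "nat \<Rightarrow> (int \<times> int) set" where
  "VN n = {0..<2^n} \<times> {0..<2^n}"

end

theory Submission imports Defs "HOL-Analysis.Harmonic_Numbers" begin

lemma normal_shift_bound:
  fixes \<sigma> t x :: real
  assumes "\<sigma> > 0" "t \<ge> 0"
  shows "normal_density 0 \<sigma> x * indicator {t<..} x \<le> exp (- (t^2) / (2*\<sigma>^2)) * normal_density 0 \<sigma> (x - t)"
proof (cases "x > t")
  case True
  have e: "(x - t)^2 + t^2 = x^2 - 2*t*(x-t)" by (simp add: power2_eq_square algebra_simps)
  have "t*(x-t) \<ge> 0" using True assms by simp
  hence "- (x^2) \<le> - (t^2) + - ((x - t)^2)" using e by linarith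
  hence "- (x^2) / (2*\<sigma>^2) \<le> (- (t^2) + - ((x - t)^2)) / (2*\<sigma>^2)"
    by (rule divide_right_mono) simp
  hence "- (x^2) / (2*\<sigma>^2) \<le> - (t^2) / (2*\<sigma>^2) + - ((x - t)^2) / (2*\<sigma>^2)"
    by (simp add: add_divide_distrib diff_divide_distrib)
  hence "exp (- (x^2) / (2*\<sigma>^2)) \<le> exp (- (t^2) / (2*\<sigma>^2)) * exp (- ((x - t)^2) / (2*\<sigma>^2))"
    by (simp add: exp_add[symmetric])
  then show ?thesis using True unfolding normal_density_def
    by (simp add: mult.left_commute[of "exp _"] divide_right_mono)
next
  case False
  then show ?thesis by (simp add: normal_density_nonneg)
qed

lemma normal_tail:
  assumes P: "prob_space M" and X: "distributed M lborel X (normal_density 0 \<sigma>)"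
    and s: "\<sigma> > 0" and t: "t \<ge> 0"
  shows "measure M {\<omega> \<in> space M. X \<omega> > t} \<le> exp (- (t^2) / (2*\<sigma>^2))"
proof -
  interpret prob_space M by fact
  have eq: "{\<omega> \<in> space M. X \<omega> > t} = X -` {t<..} \<inter> space M" by auto
  have "emeasure M {\<omega> \<in> space M. X \<omega> > t} = (\<integral>\<^sup>+x. ennreal (normal_density 0 \<sigma> x) * indicator {t<..} x \<partial>lborel)"
    unfolding eq by (rule distributed_emeasure[OF X]) simp
  also have "\<dots> \<le> (\<integral>\<^sup>+x. ennreal (exp (- (t^2) / (2*\<sigma>^2))) * ennreal (normal_density 0 \<sigma> (x - t)) \<partial>lborel)"
    apply (rule nn_integral_mono)
    using normal_shift_bound[OF s t]
    by (metis ennreal_leI ennreal_mult' exp_ge_zero indicator_mult_ennreal mult.commute)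
  also have "\<dots> = ennreal (exp (- (t^2) / (2*\<sigma>^2))) * (\<integral>\<^sup>+x. ennreal (normal_density 0 \<sigma> (x - t)) \<partial>lborel)"
    by (rule nn_integral_cmult) simp
  also have "(\<integral>\<^sup>+x. ennreal (normal_density 0 \<sigma> (x - t)) \<partial>lborel) = (\<integral>\<^sup>+x. ennreal (normal_density 0 \<sigma> (t + 1 * x - t)) \<partial>lborel)"
    using nn_integral_real_affine[where c=1 and t=t and f="\<lambda>x. ennreal (normal_density 0 \<sigma> (x - t))"] by simp
  also have "\<dots> = (\<integral>\<^sup>+x. ennreal (normal_density 0 \<sigma> x) \<partial>lborel)" by simp
  also have "\<dots> = 1"
    using integrable_normal_density[OF s] integral_normal_density[OF s] by (subst nn_integral_eq_integral) auto
  finally have "emeasure M {\<omega> \<in> space M. X \<omega> > t} \<le> ennreal (exp (- (t^2) / (2*\<sigma>^2)))" by simp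
  thus ?thesis unfolding emeasure_eq_measure by (simp add: ennreal_le_iff)
qed

lemma sum_tail:
  fixes M :: "'a measure" and b :: "nat \<Rightarrow> int \<times> int \<Rightarrow> 'a \<Rightarrow> real"
  assumes P: "prob_space M"
    and ind: "prob_space.indep_vars M (\<lambda>_. borel) (\<lambda>p. b (fst p) (snd p)) UNIV"
    and dist: "\<And>j x. distributed M lborel (b j x) (normal_density 0 (2 powr (- real j)))"
    and k: "k \<ge> 1" and fin: "finite I"
    and V: "(\<Sum>p\<in>I. real k * (2 powr (- real (fst p)))^2) \<le> V" and Vpos: "0 < V"
    and t: "t \<ge> 0" and e: "e = 1 \<or> e = -1"
  shows "measure M {\<omega> \<in> space M. e * (\<Sum>p\<in>I. sqrt (real k) * b (fst p) (snd p) \<omega>) > t}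
           \<le> exp (- (t^2) / (2*V))"
proof (cases "I = {}")
  case True
  then have E: "{\<omega> \<in> space M. e * (\<Sum>p\<in>I. sqrt (real k) * b (fst p) (snd p) \<omega>) > t} = {}"
    using t by auto
  show ?thesis unfolding E by simp
next
  case False
  interpret prob_space M by fact
  have sk: "sqrt (real k) \<noteq> 0" "sqrt (real k) > 0" using k by auto
  have Y: "distributed M lborel (\<lambda>\<omega>. 0 + sqrt (real k) * b (fst p) (snd p) \<omega>)
      (normal_density (0 + sqrt (real k) * 0) (\<bar>sqrt (real k)\<bar> * 2 powr (- real (fst p))))" for p
    by (rule normal_density_affine[OF dist]) (use sk in auto)
  have ind2: "indep_vars (\<lambda>_. borel) (\<lambda>p \<omega>. sqrt (real k) * b (fst p) (snd p) \<omega>) I"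
  proof -
    have "indep_vars (\<lambda>_. borel) (\<lambda>p. b (fst p) (snd p)) I"
      by (rule indep_vars_subset[OF ind]) auto
    then show ?thesis
      by (rule indep_vars_compose2[where X="\<lambda>p. b (fst p) (snd p)" and Y="\<lambda>_ x. sqrt (real k) * x"]) simp
  qed
  define \<sigma> where "\<sigma> = sqrt (\<Sum>p\<in>I. (sqrt (real k) * 2 powr (- real (fst p)))\<^sup>2)"
  have S: "distributed M lborel (\<lambda>\<omega>. \<Sum>p\<in>I. sqrt (real k) * b (fst p) (snd p) \<omega>)
            (normal_density (\<Sum>p\<in>I. 0) \<sigma>)"
    unfolding \<sigma>_def
    by (rule sum_indep_normal[OF fin False ind2, where \<mu>="\<lambda>_. 0"]) (use sk Y in auto)
  have spos: "\<sigma> > 0" unfolding \<sigma>_def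
    by (intro real_sqrt_gt_zero sum_pos fin False) (use sk in auto)
  have S2: "distributed M lborel (\<lambda>\<omega>. 0 + e * (\<Sum>p\<in>I. sqrt (real k) * b (fst p) (snd p) \<omega>))
            (normal_density (0 + e * (\<Sum>p\<in>I. 0)) (\<bar>e\<bar> * \<sigma>))"
    by (rule normal_density_affine[OF S spos]) (use e in auto)
  have S3: "distributed M lborel (\<lambda>\<omega>. e * (\<Sum>p\<in>I. sqrt (real k) * b (fst p) (snd p) \<omega>))
            (normal_density 0 \<sigma>)" using S2 e by auto
  have "measure M {\<omega> \<in> space M. e * (\<Sum>p\<in>I. sqrt (real k) * b (fst p) (snd p) \<omega>) > t}
        \<le> exp (- (t^2) / (2*\<sigma>^2))"
    by (rule normal_tail[OF P S3 spos t])
  also have "\<sigma>^2 = (\<Sum>p\<in>I. real k * (2 powr (- real (fst p)))^2)"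
    unfolding \<sigma>_def by (simp add: sum_nonneg power_mult_distrib)
  also have "exp (- (t^2) / (2*(\<Sum>p\<in>I. real k * (2 powr (- real (fst p)))^2))) \<le> exp (- (t^2) / (2*V))"
  proof -
    have pos: "0 < (\<Sum>p\<in>I. real k * (2 powr (- real (fst p)))^2)"
      by (intro sum_pos fin False) (use k in auto)
    have "t^2 / (2*V) \<le> t^2 / (2*(\<Sum>p\<in>I. real k * (2 powr (- real (fst p)))^2))"
      by (rule divide_left_mono) (use V pos in auto)
    then show ?thesis by simp
  qed
  finally show ?thesis .
qed

definition lift :: "nat \<Rightarrow> nat set \<Rightarrow> (nat \<Rightarrow> (int \<times> int) set) \<Rightarrow> (nat \<times> (int \<times> int)) set" where
  "lift k J B = (\<lambda>(j,x). (j*k, x)) ` (SIGMA j:J. B j)"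

lemma inj_liftmap: "k \<ge> 1 \<Longrightarrow> inj (\<lambda>(j::nat,x::int\<times>int). (j*k, x))"
  by (auto simp: inj_on_def)

lemma finite_boxes[simp]: "finite (boxes_containing L z)"
  by (simp add: boxes_containing_def)

lemma card_boxes: "card (boxes_containing L z) = 2^L * 2^L"
  by (simp add: boxes_containing_def card_cartesian_product nat_power_eq)

lemma finite_lift: "finite J \<Longrightarrow> (\<And>j. finite (B j)) \<Longrightarrow> finite (lift k J B)"
  unfolding lift_def by auto

lemma lift_sum:
  assumes "k \<ge> 1" "finite J" "\<And>j. finite (B j)"
  shows "(\<Sum>p\<in>lift k J B. g p) = (\<Sum>j\<in>J. \<Sum>x\<in>B j. g (j*k, x))"
proof -
  have "(\<Sum>p\<in>lift k J B. g p) = (\<Sum>q\<in>(SIGMA j:J. B j). g ((\<lambda>(j,x). (j*k, x)) q))"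
    unfolding lift_def
    by (rule sum.reindex_cong[OF inj_on_subset[OF inj_liftmap[OF assms(1)]]]) auto
  also have "\<dots> = (\<Sum>j\<in>J. \<Sum>x\<in>B j. g (j*k, x))"
  proof -
    have "(\<Sum>j\<in>J. \<Sum>x\<in>B j. g (j*k, x)) = (\<Sum>(j,x)\<in>Sigma J B. g (j*k,x))"
      by (rule sum.Sigma) (use assms in auto)
    then show ?thesis by (simp add: case_prod_unfold)
  qed
  finally show ?thesis .
qed

lemma lift_diff: "k \<ge> 1 \<Longrightarrow> lift k J A - lift k J B = lift k J (\<lambda>j. A j - B j)"
  unfolding lift_def using inj_liftmap[of k] by (auto simp: inj_on_def)

lemma psi_lift:
  assumes "k \<ge> 1" "finite J"
  shows "(\<Sum>j\<in>J. psi k b j z \<omega>) = (\<Sum>p\<in>lift k J (\<lambda>j. boxes_containing (j*k) z). sqrt (real k) * b (fst p) (snd p) \<omega>)"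
  using assms by (simp add: lift_sum psi_def)

lemma var_boxes:
  assumes "k \<ge> 1" "finite J"
  shows "(\<Sum>p\<in>lift k J (\<lambda>j. boxes_containing (j*k) z). real k * (2 powr (- real (fst p)))^2) = real k * card J"
proof -
  have "(\<Sum>p\<in>lift k J (\<lambda>j. boxes_containing (j*k) z). real k * (2 powr (- real (fst p)))^2)
     = (\<Sum>j\<in>J. real (card (boxes_containing (j*k) z)) * (real k * (2 powr (- real (j*k)))^2))"
    using assms by (simp add: lift_sum)
  also have "\<dots> = (\<Sum>j\<in>J. real k)"
  proof (rule sum.cong[OF refl])
    fix j
    have p: "2 powr (- real (j*k)) = (1::real) / 2^(j*k)"
      by (subst powr_minus_divide, subst powr_realpow) auto
    have "(2 powr (- real (j*k)))^2 * (2^(j*k) * 2^(j*k)) = (1::real)"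
      unfolding p by (simp add: power2_eq_square)
    then show "real (card (boxes_containing (j*k) z)) * (real k * (2 powr (- real (j*k)))^2) = real k"
      by (simp add: card_boxes algebra_simps)
  qed
  finally show ?thesis by simp
qed

lemma diff_boxes_sub:
  assumes "\<bar>fst u - fst v\<bar> \<le> 1" "\<bar>snd u - snd v\<bar> \<le> 1"
  shows "boxes_containing L u - boxes_containing L v \<subseteq>
     ({fst u - 2^L + 1, fst u} \<times> {snd u - 2^L + 1 .. snd u}) \<union> ({fst u - 2^L + 1 .. fst u} \<times> {snd u - 2^L + 1, snd u})"
  using assms unfolding boxes_containing_def by auto

lemma card_diff_boxes:
  assumes "\<bar>fst u - fst v\<bar> \<le> 1" "\<bar>snd u - snd v\<bar> \<le> 1"
  shows "card (boxes_containing L u - boxes_containing L v) \<le> 4 * 2^L"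
proof -
  let ?S = "({fst u - 2^L + 1, fst u} \<times> {snd u - 2^L + 1 .. snd u}) \<union> ({fst u - 2^L + 1 .. fst u} \<times> {snd u - 2^L + 1, snd u})"
  have "card (boxes_containing L u - boxes_containing L v) \<le> card ?S"
    by (rule card_mono[OF _ diff_boxes_sub[OF assms]]) auto
  also have "\<dots> \<le> card ({fst u - 2^L + 1, fst u} \<times> {snd u - 2^L + 1 .. snd u}) + card ({fst u - 2^L + 1 .. fst u} \<times> {snd u - 2^L + 1, snd u})"
    by (rule card_Un_le)
  also have "\<dots> \<le> 2 * 2^L + 2^L * 2"
  proof -
    have c2: "card {a::int, c} \<le> 2" for a c by (cases "a = c") auto
    have cL: "card {a - 2^L + 1 .. (a::int)} = 2^L" for a by (simp add: nat_power_eq)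
    have A: "card ({fst u - 2^L + 1, fst u} \<times> {snd u - 2^L + 1 .. snd u}) \<le> 2 * 2^L"
      unfolding card_cartesian_product cL by (rule mult_right_mono[OF c2]) simp
    have B: "card ({fst u - 2^L + 1 .. fst u} \<times> {snd u - 2^L + 1, snd u}) \<le> 2^L * 2"
      unfolding card_cartesian_product cL by (rule mult_left_mono[OF c2]) simp
    show ?thesis using add_mono[OF A B] .
  qed
  finally show ?thesis by simp
qed

lemma geom_half: "(\<Sum>j<m. (1/2::real)^j) = 2 - 2*(1/2)^m"
  by (induction m) simp_all

lemma var_diff:
  assumes k: "k \<ge> 1" and uv: "\<bar>fst u - fst v\<bar> \<le> 1" "\<bar>snd u - snd v\<bar> \<le> 1"
  shows "(\<Sum>p\<in>lift k {..<m} (\<lambda>j. boxes_containing (j*k) u - boxes_containing (j*k) v).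
            real k * (2 powr (- real (fst p)))^2) \<le> 8 * real k"
proof -
  have "(\<Sum>p\<in>lift k {..<m} (\<lambda>j. boxes_containing (j*k) u - boxes_containing (j*k) v).
            real k * (2 powr (- real (fst p)))^2)
     = (\<Sum>j<m. real (card (boxes_containing (j*k) u - boxes_containing (j*k) v)) * (real k * (2 powr (- real (j*k)))^2))"
    using k by (simp add: lift_sum)
  also have "\<dots> \<le> (\<Sum>j<m. 4 * real k * (1/2)^j)"
  proof (rule sum_mono)
    fix j
    have p: "2 powr (- real (j*k)) = (1::real) / 2^(j*k)"
      by (subst powr_minus_divide, subst powr_realpow) auto
    have c: "real (card (boxes_containing (j*k) u - boxes_containing (j*k) v)) \<le> 4 * 2^(j*k)"
      using card_diff_boxes[OF uv, of "j*k"]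
      by (metis (mono_tags, lifting) of_nat_le_iff of_nat_mult of_nat_numeral of_nat_power)
    have h: "(1/2::real)^(j*k) \<le> (1/2)^j"
      by (rule power_decreasing) (use k in auto)
    have "real (card (boxes_containing (j*k) u - boxes_containing (j*k) v)) * (real k * (2 powr (- real (j*k)))^2)
       \<le> 4 * 2^(j*k) * (real k * (1 / 2^(j*k))^2)"
      unfolding p by (rule mult_right_mono[OF c]) simp
    also have "\<dots> = 4 * real k * (1/2)^(j*k)"
      by (simp add: power2_eq_square power_divide field_simps)
    also have "\<dots> \<le> 4 * real k * (1/2)^j"
      by (rule mult_left_mono[OF h]) simp
    finally show "real (card (boxes_containing (j*k) u - boxes_containing (j*k) v)) * (real k * (2 powr (- real (j*k)))^2)
       \<le> 4 * real k * (1/2)^j" .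
  qed
  also have "\<dots> = 4 * real k * (\<Sum>j<m. (1/2)^j)" by (simp add: sum_distrib_left)
  also have "\<dots> \<le> 4 * real k * 2" unfolding geom_half by (rule mult_left_mono) auto
  finally show ?thesis by simp
qed

lemma exp_pow2: "real (2^n) = exp (real n * ln 2)"
  by (simp add: exp_of_nat_mult)

lemma two_pow_ge: "real k \<le> 2^k"
proof -
  have "k < 2^k" by (rule less_exp)
  then have "real k < real (2^k)" by linarith
  then show ?thesis by simp
qed

lemma numeric1:
  fixes n :: nat and L :: real
  assumes L: "L \<ge> 69/100"
  shows "exp (2 * real n * L) * exp (- (25/8 * real n * L^2)) \<le> 2 * exp (- real n / 10)"
proof -
  have LL: "L*L \<ge> 69/100*L" by (rule mult_right_mono) (use L in auto)
  have q: "25/8 * L^2 - 2*L - 1/10 \<ge> 0" using L LL unfolding power2_eq_square by linarith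
  have "real n * (25/8 * L^2 - 2*L - 1/10) \<ge> 0" using q by simp
  then have "2 * real n * L + - (25/8 * real n * L^2) \<le> - real n / 10" by (simp add: algebra_simps)
  then have "exp (2 * real n * L + - (25/8 * real n * L^2)) \<le> exp (- real n / 10)" by (simp only: exp_le_cancel_iff)
  also have "\<dots> \<le> 2 * exp (- real n / 10)" by simp
  finally show ?thesis by (simp only: exp_add)
qed

lemma numeric2:
  fixes n :: nat assumes n: "n \<ge> 1"
  shows "real (2^n * 2^n * (2^n * 2^n)) * (4 * exp (- (100 * real n))) \<le> exp (- real n / 10)"
proof -
  have L: "ln (2::real) \<le> 25/36" by (rule ln2_le_25_over_36)
  have e: "real (2^n * 2^n * (2^n * 2^n)) = exp (4 * (real n * ln 2))"
  proof -
    have p: "(2::real)^n = exp (real n * ln 2)" by (simp add: exp_of_nat_mult)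
    have "real (2^n * 2^n * (2^n * 2^n)) = (2::real)^n * 2^n * (2^n * 2^n)" by simp
    also have "\<dots> = exp (real n*ln 2 + real n*ln 2 + (real n*ln 2 + real n*ln 2))" by (simp only: p exp_add)
    also have "\<dots> = exp (4 * (real n * ln 2))" by (rule arg_cong[where f=exp]) simp
    finally show ?thesis .
  qed
  have f: "(4::real) = exp (2 * ln 2)"
    by (simp add: exp_of_nat_mult[of 2 "ln 2", simplified])
  have "4 * (real n * ln 2) + 2 * ln 2 + - (100 * real n) \<le> - real n / 10"
  proof -
    have "real n * ln 2 \<le> real n * (25/36)" by (rule mult_left_mono[OF L]) simp
    moreover have "real n \<ge> 1" using n by simp
    ultimately show ?thesis using L by linarith
  qed
  then have "exp (4 * (real n * ln 2) + 2 * ln 2 + - (100 * real n)) \<le> exp (- real n / 10)"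
    by (simp only: exp_le_cancel_iff)
  moreover have "real (2^n * 2^n * (2^n * 2^n)) * (4 * exp (- (100 * real n))) = exp (4 * (real n * ln 2) + 2 * ln 2 + - (100 * real n))"
    unfolding e exp_add f[symmetric] by (simp add: mult_ac)
  ultimately show ?thesis by simp
qed

lemma numeric3:
  fixes n k :: nat assumes n: "n \<ge> 1" and k: "k \<ge> 1"
  shows "exp (- ((100 * sqrt (2 ^ k * ln (2 ^ n)) / 2)^2) / (2 * (8 * real k))) \<le> exp (- (100 * real n))"
proof -
  have L: "ln (2::real) \<ge> 69/100" using ln_approx_bounds[of 2 3] by (simp add: eval_nat_numeral)
  have nn: "(0::real) \<le> 2 ^ k * ln (2 ^ n)" by simp
  have sq: "(100 * sqrt (2 ^ k * ln (2 ^ n)) / 2)^2 = 2500 * (2^k * (real n * ln 2))"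
    using nn by (simp add: power2_eq_square power_mult_distrib ln_realpow)
  have kk: "real k \<le> 2^k" by (rule two_pow_ge)
  have "1600 * real k * real n \<le> 2500 * (2^k * (real n * ln 2))"
  proof -
    have "1600 * real k * real n \<le> 1600 * 2^k * real n" using kk by (simp add: mult_right_mono)
    also have "\<dots> \<le> 2500 * 2^k * (real n * ln 2)"
    proof -
      have "real n * (1600/2500) \<le> real n * ln 2" by (rule mult_left_mono) (use L in auto)
      then have "1600 * real n \<le> 2500 * (real n * ln 2)" by simp
      then show ?thesis by (simp add: mult_left_mono mult.assoc mult.left_commute[of "2^k"])
    qed
    finally show ?thesis by (simp add: mult.assoc)
  qed
  then have "100 * real n \<le> 2500 * (2^k * (real n * ln 2)) / (2 * (8 * real k))"
    using k by (simp add: field_simps)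
  then show ?thesis unfolding sq by simp
qed


locale gff =
  fixes M :: "'a measure" and b :: "nat \<Rightarrow> int \<times> int \<Rightarrow> 'a \<Rightarrow> real" and k n :: nat
  assumes P: "prob_space M"
    and ind: "prob_space.indep_vars M (\<lambda>_. borel) (\<lambda>p. b (fst p) (snd p)) UNIV"
    and dist: "\<And>j x. distributed M lborel (b j x) (normal_density 0 (2 powr (- real j)))"
    and k: "k \<ge> 1" and n: "n \<ge> 1"
begin

sublocale prob_space M by (rule P)

lemma bm[measurable]: "b j x \<in> borel_measurable M"
  using distributed_measurable[OF dist[of j x]] by simp

lemma L: "ln (2::real) \<ge> 69/100" using ln_approx_bounds[of 2 3] by (simp add: eval_nat_numeral)
lemma finVN: "finite (VN n)" by (simp add: VN_def)
lemma cardVN: "card (VN n) = 2^n * 2^n" by (simp add: VN_def card_cartesian_product nat_power_eq)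
lemma km: "real k * real (n div k) \<le> real n"
proof -
  have "k * (n div k) \<le> n" by (metis div_mult_self_is_m k less_le_trans zero_less_one div_times_less_eq_dividend mult.commute)
  then show ?thesis by (metis of_nat_le_iff of_nat_mult)
qed
lemma lnN: "ln ((2::real)^n) = real n * ln 2" by (simp add: ln_realpow)

lemma cardJ:
  assumes d: "0 < \<delta>" 
  shows "real k * real (card {nat \<lceil>(1 - \<delta>^2) * real (n div k)\<rceil>..<n div k}) \<le> \<delta>^2 * real n"
proof -
  define J where "J = {nat \<lceil>(1 - \<delta>^2) * real (n div k)\<rceil>..<n div k}"
  have "real (card J) \<le> \<delta>^2 * real (n div k)"
  proof (cases "nat \<lceil>(1 - \<delta>^2) * real (n div k)\<rceil> \<le> n div k")
    case True
    have c: "real (card J) = real (n div k) - real (nat \<lceil>(1 - \<delta>^2) * real (n div k)\<rceil>)"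
      unfolding J_def using True by (simp add: of_nat_diff)
    have "real (nat \<lceil>(1 - \<delta>^2) * real (n div k)\<rceil>) \<ge> (1 - \<delta>^2) * real (n div k)"
    proof -
      have a: "(1 - \<delta>^2) * real (n div k) \<le> of_int \<lceil>(1 - \<delta>^2) * real (n div k)\<rceil>" by (rule le_of_int_ceiling)
      have b: "real_of_int c \<le> real (nat c)" for c by (cases "c \<ge> 0") auto
      show ?thesis using a b[of "\<lceil>(1 - \<delta>^2) * real (n div k)\<rceil>"] by linarith
    qed
    then show ?thesis unfolding c by (simp add: algebra_simps)
  next
    case False
    then have "n div k \<le> nat \<lceil>(1 - \<delta>^2) * real (n div k)\<rceil>" by linarith
    then have "card J = 0" unfolding J_def by simp
    then show ?thesis by simp
  qed
  then have "real k * real (card J) \<le> real k * (\<delta>^2 * real (n div k))"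
    by (rule mult_left_mono) simp
  also have "\<dots> = \<delta>^2 * (real k * real (n div k))" by simp
  also have "\<dots> \<le> \<delta>^2 * real n" by (rule mult_left_mono[OF km]) simp
  finally show ?thesis unfolding J_def .
qed

lemma FB:
  assumes d: "0 < \<delta>" and Tnn: "T \<ge> 0"
  shows "measure M {\<omega> \<in> space M. T < (\<Sum>j\<in>{nat \<lceil>(1 - \<delta>^2) * real (n div k)\<rceil>..<n div k}. psi k b j z \<omega>)}
     \<le> exp (- (T^2) / (2 * (\<delta>^2 * real n)))"
proof -
  define J where "J = {nat \<lceil>(1 - \<delta>^2) * real (n div k)\<rceil>..<n div k}"
  have Vpos: "0 < \<delta>^2 * real n" using d n by simp
  have "{\<omega> \<in> space M. T < (\<Sum>j\<in>J. psi k b j z \<omega>)} = {\<omega> \<in> space M. 1 * (\<Sum>p\<in>lift k J (\<lambda>j. boxes_containing (j*k) z). sqrt (real k) * b (fst p) (snd p) \<omega>) > T}"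
    using psi_lift[OF k, of J b z] by (simp add: J_def)
  also have "measure M \<dots> \<le> exp (- (T^2) / (2 * (\<delta>^2 * real n)))"
  proof (rule sum_tail[OF P ind dist k])
    show "finite (lift k J (\<lambda>j. boxes_containing (j * k) z))" by (simp add: J_def finite_lift)
    have fJ: "finite J" by (simp add: J_def)
    have "(\<Sum>p\<in>lift k J (\<lambda>j. boxes_containing (j * k) z). real k * (2 powr - real (fst p))\<^sup>2) = real k * real (card J)"
      by (rule var_boxes[OF k fJ])
    then show "(\<Sum>p\<in>lift k J (\<lambda>j. boxes_containing (j * k) z). real k * (2 powr - real (fst p))\<^sup>2) \<le> \<delta>\<^sup>2 * real n"
      using cardJ[OF d] unfolding J_def by linarith
  qed (use Tnn Vpos in auto)
  finally show ?thesis unfolding J_def .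
qed

lemma part1:
  assumes d: "0 < \<delta>"
  shows "measure M {\<omega> \<in> space M. \<forall>z\<in>VN n.
            (\<Sum>j\<in>{nat \<lceil>(1 - \<delta>^2) * real (n div k)\<rceil>..<n div k}. psi k b j z \<omega>)
              \<le> 5/2 * \<delta> * ln (2 ^ n)}
           \<ge> 1 - 2 * exp (- real n / 10)"
proof -
  define J where "J = {nat \<lceil>(1 - \<delta>^2) * real (n div k)\<rceil>..<n div k}"
  define T where "T = 5/2 * \<delta> * ln ((2::real) ^ n)"
  define F where "F z = {\<omega> \<in> space M. T < (\<Sum>j\<in>J. psi k b j z \<omega>)}" for z
  have Fev: "F z \<in> events" for z unfolding F_def psi_def by measurable
  have Tnn: "T \<ge> 0" unfolding T_def using d by simp
  have Texp: "T^2 / (2 * (\<delta>^2 * real n)) = 25/8 * real n * (ln 2)^2"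
    unfolding T_def lnN using d n by (simp add: power2_eq_square field_simps)
  have eq: "{\<omega> \<in> space M. \<forall>z\<in>VN n. (\<Sum>j\<in>J. psi k b j z \<omega>) \<le> T} = space M - (\<Union>z\<in>VN n. F z)"
    unfolding F_def by (auto simp: not_less)
  have U: "(\<Union>z\<in>VN n. F z) \<in> events" using Fev finVN by auto
  have "measure M (\<Union>z\<in>VN n. F z) \<le> (\<Sum>z\<in>VN n. measure M (F z))"
    by (rule measure_UNION_le[OF finVN Fev])
  also have "\<dots> \<le> (\<Sum>z\<in>VN n. exp (- (T^2) / (2 * (\<delta>^2 * real n))))"
    by (rule sum_mono) (unfold F_def J_def, rule FB[OF d Tnn])
  also have "\<dots> = real (2^n * 2^n) * exp (- (25/8 * real n * (ln 2)^2))"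
    using Texp by (simp add: cardVN)
  also have "real (2^n * 2^n) = exp (2 * real n * ln 2)"
  proof -
    have p: "(2::real)^n = exp (real n * ln 2)" by (simp add: exp_of_nat_mult)
    have "real (2^n * 2^n) = (2::real)^n * 2^n" by simp
    also have "\<dots> = exp (real n*ln 2 + real n*ln 2)" by (simp only: p exp_add)
    also have "\<dots> = exp (2 * real n * ln 2)" by (rule arg_cong[where f=exp]) simp
    finally show ?thesis .
  qed
  also have "exp (2 * real n * ln 2) * exp (- (25/8 * real n * (ln 2)^2)) \<le> 2 * exp (- real n / 10)"
    by (rule numeric1[OF L])
  finally have "measure M (\<Union>z\<in>VN n. F z) \<le> 2 * exp (- real n / 10)" .
  then have "measure M {\<omega> \<in> space M. \<forall>z\<in>VN n. (\<Sum>j\<in>J. psi k b j z \<omega>) \<le> T} \<ge> 1 - 2 * exp (- real n / 10)"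
    unfolding eq using prob_compl[OF U] by simp
  then show ?thesis unfolding J_def T_def .
qed

definition "lb u = lift k {..<n div k} (\<lambda>j. boxes_containing (j*k) u)"
definition "Sm X \<omega> = (\<Sum>p\<in>X. sqrt (real k) * b (fst p) (snd p) \<omega>)"

lemma Emeas: "{\<omega> \<in> space M. e * Sm X \<omega> > s} \<in> events"
  unfolding Sm_def by measurable

lemma Ebound:
  assumes uv: "\<bar>fst u - fst v\<bar> \<le> 1" "\<bar>snd u - snd v\<bar> \<le> 1" and e: "e = 1 \<or> e = -1"
  shows "measure M {\<omega> \<in> space M. e * Sm (lb u - lb v) \<omega> > 100 * sqrt (2 ^ k * ln ((2::real) ^ n)) / 2}
     \<le> exp (- (100 * real n))"
proof -
  let ?t = "100 * sqrt (2 ^ k * ln ((2::real) ^ n))"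
  have tnn: "?t / 2 \<ge> 0" by simp
  have "measure M {\<omega> \<in> space M. e * Sm (lb u - lb v) \<omega> > ?t/2} \<le> exp (- ((?t/2)^2) / (2 * (8 * real k)))"
    unfolding Sm_def lb_def lift_diff[OF k]
  proof (rule sum_tail[OF P ind dist k])
    show "finite (lift k {..<n div k} (\<lambda>j. boxes_containing (j * k) u - boxes_containing (j * k) v))"
      by (simp add: finite_lift)
    show "(\<Sum>p\<in>lift k {..<n div k} (\<lambda>j. boxes_containing (j * k) u - boxes_containing (j * k) v).
        real k * (2 powr - real (fst p))\<^sup>2) \<le> 8 * real k" by (rule var_diff[OF k uv])
  qed (use tnn e k in auto)
  also have "\<dots> \<le> exp (- (100 * real n))" by (rule numeric3[OF n k])
  finally show ?thesis .
qed

lemma phid: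
  "phi k n b u \<omega> - phi k n b v \<omega> = Sm (lb u - lb v) \<omega> - Sm (lb v - lb u) \<omega>"
proof -
  have fin: "finite (lb w)" for w unfolding lb_def by (simp add: finite_lift)
  have ph: "phi k n b w \<omega> = Sm (lb w) \<omega>" for w
    unfolding phi_def Sm_def lb_def using psi_lift[OF k, of "{..<n div k}" b w \<omega>] by simp
  have a: "Sm (lb u) \<omega> = Sm (lb u \<inter> lb v) \<omega> + Sm (lb u - lb v) \<omega>"
    unfolding Sm_def by (rule sum.Int_Diff[OF fin])
  have c: "Sm (lb v) \<omega> = Sm (lb u \<inter> lb v) \<omega> + Sm (lb v - lb u) \<omega>"
    unfolding Sm_def Int_commute[of "lb u"] by (rule sum.Int_Diff[OF fin])
  show ?thesis unfolding ph a c by simp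
qed

lemma GB:
  assumes uv: "\<bar>fst u - fst v\<bar> \<le> 1" "\<bar>snd u - snd v\<bar> \<le> 1"
  shows "measure M {\<omega> \<in> space M. 100 * sqrt (2 ^ k * ln ((2::real) ^ n)) < \<bar>phi k n b u \<omega> - phi k n b v \<omega>\<bar>}
     \<le> 4 * exp (- (100 * real n))"
proof -
  let ?t = "100 * sqrt (2 ^ k * ln ((2::real) ^ n))"
  have vu: "\<bar>fst v - fst u\<bar> \<le> 1" "\<bar>snd v - snd u\<bar> \<le> 1" using uv by auto
  let ?E = "\<lambda>e X. {\<omega> \<in> space M. e * Sm X \<omega> > ?t/2}"
  have sub: "{\<omega> \<in> space M. ?t < \<bar>phi k n b u \<omega> - phi k n b v \<omega>\<bar>} \<subseteq> (?E 1 (lb u - lb v) \<union> ?E (-1) (lb u - lb v)) \<union> (?E 1 (lb v - lb u) \<union> ?E (-1) (lb v - lb u))"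
  proof
    fix \<omega> assume "\<omega> \<in> {\<omega> \<in> space M. ?t < \<bar>phi k n b u \<omega> - phi k n b v \<omega>\<bar>}"
    then have "\<omega> \<in> space M" "?t < \<bar>Sm (lb u - lb v) \<omega> - Sm (lb v - lb u) \<omega>\<bar>" unfolding phid by auto
    then show "\<omega> \<in> (?E 1 (lb u - lb v) \<union> ?E (-1) (lb u - lb v)) \<union> (?E 1 (lb v - lb u) \<union> ?E (-1) (lb v - lb u))"
      by auto
  qed
  have "measure M {\<omega> \<in> space M. ?t < \<bar>phi k n b u \<omega> - phi k n b v \<omega>\<bar>} \<le> measure M ((?E 1 (lb u - lb v) \<union> ?E (-1) (lb u - lb v)) \<union> (?E 1 (lb v - lb u) \<union> ?E (-1) (lb v - lb u)))"
    by (rule finite_measure_mono[OF sub]) (intro sets.Un Emeas)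
  also have "\<dots> \<le> measure M (?E 1 (lb u - lb v) \<union> ?E (-1) (lb u - lb v)) + measure M (?E 1 (lb v - lb u) \<union> ?E (-1) (lb v - lb u))"
    by (rule measure_Un_le) (intro sets.Un Emeas)+
  also have "\<dots> \<le> (measure M (?E 1 (lb u - lb v)) + measure M (?E (-1) (lb u - lb v))) + (measure M (?E 1 (lb v - lb u)) + measure M (?E (-1) (lb v - lb u)))"
    by (intro add_mono measure_Un_le Emeas)
  also have "\<dots> \<le> (exp (- (100 * real n)) + exp (- (100 * real n))) + (exp (- (100 * real n)) + exp (- (100 * real n)))"
    by (intro add_mono Ebound uv vu) auto
  finally show ?thesis by simp
qed

lemma part2:
  shows "measure M {\<omega> \<in> space M. \<forall>u\<in>VN n. \<forall>v\<in>VN n.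
            \<bar>fst u - fst v\<bar> + \<bar>snd u - snd v\<bar> = 1 \<longrightarrow>
            \<bar>phi k n b u \<omega> - phi k n b v \<omega>\<bar> \<le> 100 * sqrt (2 ^ k * ln (2 ^ n))}
           \<ge> 1 - exp (- real n / 10)"
proof -
  define t where "t = 100 * sqrt (2 ^ k * ln ((2::real) ^ n))"
  define Adj where "Adj = {q \<in> VN n \<times> VN n. \<bar>fst (fst q) - fst (snd q)\<bar> + \<bar>snd (fst q) - snd (snd q)\<bar> = 1}"
  define G where "G q = {\<omega> \<in> space M. t < \<bar>phi k n b (fst q) \<omega> - phi k n b (snd q) \<omega>\<bar>}" for q
  have Gev: "G q \<in> events" for q unfolding G_def phi_def psi_def by measurable
  have finAdj: "finite Adj" unfolding Adj_def using finVN by auto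
  have GB': "measure M (G q) \<le> 4 * exp (- (100 * real n))" if q: "q \<in> Adj" for q
  proof -
    have "\<bar>fst (fst q) - fst (snd q)\<bar> \<le> 1" "\<bar>snd (fst q) - snd (snd q)\<bar> \<le> 1"
      using q unfolding Adj_def by auto
    then show ?thesis unfolding G_def t_def by (rule GB)
  qed
  have eq: "{\<omega> \<in> space M. \<forall>u\<in>VN n. \<forall>v\<in>VN n.
          \<bar>fst u - fst v\<bar> + \<bar>snd u - snd v\<bar> = 1 \<longrightarrow>
          \<bar>phi k n b u \<omega> - phi k n b v \<omega>\<bar> \<le> t} = space M - (\<Union>q\<in>Adj. G q)"
    unfolding G_def Adj_def by (auto simp: not_less) (metis fst_conv snd_conv not_less)
  have U: "(\<Union>q\<in>Adj. G q) \<in> events" using Gev finAdj by auto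
  have "measure M (\<Union>q\<in>Adj. G q) \<le> (\<Sum>q\<in>Adj. measure M (G q))"
    by (rule measure_UNION_le[OF finAdj Gev])
  also have "\<dots> \<le> (\<Sum>q\<in>Adj. 4 * exp (- (100 * real n)))" by (rule sum_mono[OF GB'])
  also have "\<dots> = real (card Adj) * (4 * exp (- (100 * real n)))" by simp
  also have "\<dots> \<le> real (card (VN n \<times> VN n)) * (4 * exp (- (100 * real n)))"
  proof -
    have "card Adj \<le> card (VN n \<times> VN n)" unfolding Adj_def by (rule card_mono) (use finVN in auto)
    then show ?thesis by (intro mult_right_mono) auto
  qed
  also have "\<dots> = real (2^n * 2^n * (2^n * 2^n)) * (4 * exp (- (100 * real n)))"
    by (simp only: card_cartesian_product cardVN)
  also have "\<dots> \<le> exp (- real n / 10)" by (rule numeric2[OF n])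
  finally have "measure M (\<Union>q\<in>Adj. G q) \<le> exp (- real n / 10)" .
  then have "measure M {\<omega> \<in> space M. \<forall>u\<in>VN n. \<forall>v\<in>VN n.
          \<bar>fst u - fst v\<bar> + \<bar>snd u - snd v\<bar> = 1 \<longrightarrow>
          \<bar>phi k n b u \<omega> - phi k n b v \<omega>\<bar> \<le> t} \<ge> 1 - exp (- real n / 10)"
    unfolding eq using prob_compl[OF U] by simp
  then show ?thesis unfolding t_def .
qed

end

theorem lemma2p3:
  fixes M :: "'a measure" and b :: "nat \<Rightarrow> int \<times> int \<Rightarrow> 'a \<Rightarrow> real"
    and k n :: nat and \<delta> :: real
  assumes "prob_space M"
    and "prob_space.indep_vars M (\<lambda>_. borel) (\<lambda>p. b (fst p) (snd p)) UNIV"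
    and "\<And>j x. distributed M lborel (b j x) (normal_density 0 (2 powr (- real j)))"
    and "k \<ge> 1" and "n \<ge> 1" and "0 < \<delta>" and "\<delta> < 1"
  shows "measure M {\<omega> \<in> space M. \<forall>z\<in>VN n.
            (\<Sum>j\<in>{nat \<lceil>(1 - \<delta>^2) * real (n div k)\<rceil>..<n div k}. psi k b j z \<omega>)
              \<le> 5/2 * \<delta> * ln (2 ^ n)}
           \<ge> 1 - 2 * exp (- real n / 10)
       \<and> measure M {\<omega> \<in> space M. \<forall>u\<in>VN n. \<forall>v\<in>VN n.
            \<bar>fst u - fst v\<bar> + \<bar>snd u - snd v\<bar> = 1 \<longrightarrow>
            \<bar>phi k n b u \<omega> - phi k n b v \<omega>\<bar> \<le> 100 * sqrt (2 ^ k * ln (2 ^ n))}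
           \<ge> 1 - exp (- real n / 10)"
proof -
  have "gff M b k n" unfolding gff_def using assms(1-5) by blast
  then interpret gff M b k n .
  show ?thesis using part1[OF assms(6)] part2 by simp
qed

end
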